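(* Let $k \ge 2$ and $2 \le n_1 \le n_2 \le \cdots \le n_k$ be integers, and let $K_{n_1,\dots,n_k}$ be the complete $k$-partite graph with parts of sizes $n_1,\dots,n_k$. (i) If $n_1$ is even, then $\mathrm{sg_e}(K_{n_1,\dots,n_k}) = \sum_{j=2}^k n_j + 1$ if $n_2 \in \{n_1, n_1+1\}$, and $\mathrm{sg_e}(K_{n_1,\dots,n_k}) = \sum_{j=2}^k n_j$ otherwise. (ii) If $n_1$ is odd, then $\mathrm{sg_e}(K_{n_1,\dots,n_k}) = \sum_{j=2}^k n_j + 2$ if $n_2 = n_1$, and $\mathrm{sg_e}(K_{n_1,\dots,n_k}) = \sum_{j=2}^k n_j$ otherwise.
   Context: All graphs are finite, simple and connected. A set $S \subseteq V(G)$ is a strong edge geodetic set of $G$ if one can assign to every unordered pair $\{u,v\}$ of distinct vertices of $S$ either one shortest $u,v$-path $P_{uv}$ in $G$ or no path, in such a way that every edge of $G$ lies on at least one of the assigned paths. The strong edge geodetic number $\mathrm{sg_e}(G)$ is the minimum cardinality of a strong edge geodetic set of $G$. *)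

theory Defs
  imports Main
begin

definition is_path :: "'a set \<Rightarrow> 'a set set \<Rightarrow> 'a list \<Rightarrow> 'a \<Rightarrow> 'a \<Rightarrow> bool" where
  "is_path V E p u v \<longleftrightarrow> p \<noteq> [] \<and> hd p = u \<and> last p = v \<and> distinct p \<and> set p \<subseteq> V \<and>
     (\<forall>i. Suc i < length p \<longrightarrow> {p ! i, p ! Suc i} \<in> E)"

definition is_shortest_path :: "'a set \<Rightarrow> 'a set set \<Rightarrow> 'a list \<Rightarrow> 'a \<Rightarrow> 'a \<Rightarrow> bool" where
  "is_shortest_path V E p u v \<longleftrightarrow> is_path V E p u v \<and>
     (\<forall>q. is_path V E q u v \<longrightarrow> length p \<le> length q)"

definition path_edges :: "'a list \<Rightarrow> 'a set set" where
  "path_edges p = {{p ! i, p ! Suc i} | i. Suc i < length p}"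

text \<open>Each unordered pair {u,v} of distinct vertices of S is assigned either one
shortest u,v-path (Some p) or no path (None); every edge must lie on an assigned path.\<close>
definition strong_edge_geodetic :: "'a set \<Rightarrow> 'a set set \<Rightarrow> 'a set \<Rightarrow> bool" where
  "strong_edge_geodetic V E S \<longleftrightarrow> S \<subseteq> V \<and>
     (\<exists>P :: 'a set \<Rightarrow> 'a list option.
        (\<forall>u\<in>S. \<forall>v\<in>S. u \<noteq> v \<longrightarrow>
            (\<forall>p. P {u, v} = Some p \<longrightarrow> is_shortest_path V E p u v \<or> is_shortest_path V E p v u)) \<and>
        (\<forall>e\<in>E. \<exists>u\<in>S. \<exists>v\<in>S. u \<noteq> v \<and> (\<exists>p. P {u, v} = Some p \<and> e \<in> path_edges p)))"

definition sg_e :: "'a set \<Rightarrow> 'a set set \<Rightarrow> nat" where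
  "sg_e V E = (LEAST m. \<exists>S. finite S \<and> strong_edge_geodetic V E S \<and> card S = m)"

definition kpart_V :: "nat \<Rightarrow> (nat \<Rightarrow> nat) \<Rightarrow> (nat \<times> nat) set" where
  "kpart_V k n = {(i, x). 1 \<le> i \<and> i \<le> k \<and> x < n i}"

definition kpart_E :: "nat \<Rightarrow> (nat \<Rightarrow> nat) \<Rightarrow> (nat \<times> nat) set set" where
  "kpart_E k n = {{a, b} | a b. a \<in> kpart_V k n \<and> b \<in> kpart_V k n \<and> fst a \<noteq> fst b}"

end

theory Submission imports Defs begin

definition ce :: "nat \<Rightarrow> nat \<Rightarrow> nat \<Rightarrow> nat" where
  "ce q x y = (if x = q then (2*y) mod q else if y = q then (2*x) mod q else (x+y) mod q)"

lemma ce_sym: "ce q x y = ce q y x"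
  unfolding ce_def by (auto simp: add.commute)

lemma ce_ex:
  assumes q: "odd q" and r: "r < q" and b: "b \<le> q"
  shows "\<exists>b'\<le>q. b' \<noteq> b \<and> ce q b b' = r"
proof (cases "b = q")
  case True
  show ?thesis
  proof (cases "even r")
    case True
    then show ?thesis using \<open>b = q\<close> r q
      by (intro exI[of _ "r div 2"]) (auto simp: ce_def)
  next
    case False
    have "(r + q) div 2 < q" using r by auto
    moreover have "2 * ((r + q) div 2) = r + q" using False q by presburger
    moreover have "(r+q) mod q = r" using r by simp
    ultimately show ?thesis using \<open>b = q\<close>
      by (intro exI[of _ "(r+q) div 2"]) (auto simp: ce_def)
  qed
next
  case False
  hence bq: "b < q" using b by auto
  show ?thesis
  proof (cases "(2*b) mod q = r")
    case True
    then show ?thesis using bq by (intro exI[of _ q]) (auto simp: ce_def)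
  next
    case F: False
    define b' where "b' = (r + q - b) mod q"
    have b'q: "b' < q" using bq unfolding b'_def by auto
    have "(b + b') mod q = (b + (r + q - b)) mod q" unfolding b'_def by (simp add: mod_add_right_eq)
    also have "\<dots> = r" using bq r by simp
    finally have s: "(b + b') mod q = r" .
    have "b' \<noteq> b" using s F by (auto simp: mult_2)
    then show ?thesis using s b'q bq by (intro exI[of _ b']) (auto simp: ce_def)
  qed
qed

definition fcov :: "nat \<Rightarrow> nat" where
  "fcov m = (if even m then m - 1 else m - 2)"

definition col :: "nat \<Rightarrow> nat \<Rightarrow> nat \<Rightarrow> nat" where
  "col m x y = (if even m then ce (m-1) x y else
     (if x = m - 1 then (if y < m - 2 then y else 0) else if y = m - 1 then (if x < m - 2 then x else 0)
      else ce (m-2) x y))"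

lemma col_sym: "col m x y = col m y x"
  unfolding col_def using ce_sym by auto

lemma col_ex:
  assumes m: "m \<ge> 2" and r: "r < fcov m" and b: "b < m"
  shows "\<exists>b'<m. b' \<noteq> b \<and> col m b b' = r"
proof (cases "even m")
  case True
  then have "odd (m-1)" "r < m - 1" "b \<le> m - 1" using m r b by (auto simp: fcov_def)
  from ce_ex[OF this] obtain b' where "b' \<le> m-1" "b' \<noteq> b" "ce (m-1) b b' = r" by auto
  then show ?thesis using True m by (intro exI[of _ b']) (auto simp: col_def)
next
  case False
  then have m3: "m \<ge> 3" "r < m - 2" using m r by (auto simp: fcov_def)
  show ?thesis
  proof (cases "b = m - 1")
    case True
    then show ?thesis using False m3 by (intro exI[of _ r]) (auto simp: col_def)
  next
    case bF: False
    have "odd (m-2)" "r < m - 2" "b \<le> m - 2" using m3 b bF False by auto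
    from ce_ex[OF this] obtain b' where "b' \<le> m-2" "b' \<noteq> b" "ce (m-2) b b' = r" by auto
    then show ?thesis using False m3 bF by (intro exI[of _ b']) (auto simp: col_def)
  qed
qed


locale kp =
  fixes k :: nat and n :: "nat \<Rightarrow> nat"
  assumes k2: "k \<ge> 2" and n1: "n 1 \<ge> 2"
    and mono: "\<And>i j. 1 \<le> i \<Longrightarrow> i \<le> j \<Longrightarrow> j \<le> k \<Longrightarrow> n i \<le> n j"
begin

abbreviation "V \<equiv> kpart_V k n"
abbreviation "E \<equiv> kpart_E k n"

lemma inV: "x \<in> V \<longleftrightarrow> 1 \<le> fst x \<and> fst x \<le> k \<and> snd x < n (fst x)"
  by (cases x) (auto simp: kpart_V_def)

lemma edge_iff: "{x,y} \<in> E \<longleftrightarrow> x \<in> V \<and> y \<in> V \<and> fst x \<noteq> fst y"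
proof
  assume "{x,y} \<in> E"
  then show "x \<in> V \<and> y \<in> V \<and> fst x \<noteq> fst y" unfolding kpart_E_def by (auto simp: doubleton_eq_iff)
next
  assume "x \<in> V \<and> y \<in> V \<and> fst x \<noteq> fst y"
  then show "{x,y} \<in> E" unfolding kpart_E_def by blast
qed

lemma path2: "x \<in> V \<Longrightarrow> y \<in> V \<Longrightarrow> fst x \<noteq> fst y \<Longrightarrow> is_path V E [x,y] x y"
  unfolding is_path_def by (auto simp: edge_iff)

lemma path3: "x \<in> V \<Longrightarrow> y \<in> V \<Longrightarrow> w \<in> V \<Longrightarrow> x \<noteq> y \<Longrightarrow> fst w \<noteq> fst x \<Longrightarrow> fst x = fst y
   \<Longrightarrow> is_path V E [x,w,y] x y"
  unfolding is_path_def by (auto simp: edge_iff less_Suc_eq nth_Cons split: nat.splits)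


lemma pe_cons: "path_edges (x#y#p) = insert {x,y} (path_edges (y#p))"
  unfolding path_edges_def
proof (rule set_eqI, rule iffI)
  fix e assume "e \<in> {{(x # y # p) ! i, (x # y # p) ! Suc i} |i. Suc i < length (x # y # p)}"
  then obtain i where "e = {(x # y # p) ! i, (x # y # p) ! Suc i}" "Suc i < length (x # y # p)" by auto
  then show "e \<in> insert {x, y} {{(y # p) ! i, (y # p) ! Suc i} |i. Suc i < length (y # p)}"
    by (cases i) auto
next
  fix e assume "e \<in> insert {x, y} {{(y # p) ! i, (y # p) ! Suc i} |i. Suc i < length (y # p)}"
  then show "e \<in> {{(x # y # p) ! i, (x # y # p) ! Suc i} |i. Suc i < length (x # y # p)}"
  proof
    assume "e = {x,y}" then show ?thesis by (auto intro!: exI[of _ 0])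
  next
    assume "e \<in> {{(y # p) ! i, (y # p) ! Suc i} |i. Suc i < length (y # p)}"
    then obtain i where "e = {(y # p) ! i, (y # p) ! Suc i}" "Suc i < length (y # p)" by auto
    then show ?thesis by (auto intro!: exI[of _ "Suc i"])
  qed
qed

lemma pe1: "path_edges [x] = {}"
  unfolding path_edges_def by auto

lemma pe3: "path_edges [x,w,y] = {{x,w},{w,y}}"
  by (simp add: pe_cons pe1)

lemma pe2: "path_edges [x,y] = {{x,y}}"
  by (simp add: pe_cons pe1)

lemma other_part: "x \<in> V \<Longrightarrow> \<exists>w\<in>V. fst w \<noteq> fst x"
proof -
  assume x: "x \<in> V"
  have "n 2 \<ge> 2" using mono[of 1 2] n1 k2 by auto
  show ?thesis
  proof (cases "fst x = 1")
    case True
    have "(2,0) \<in> V" using \<open>n 2 \<ge> 2\<close> k2 by (simp add: inV)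
    then show ?thesis using True by force
  next
    case False
    have "(1,0) \<in> V" using n1 k2 by (simp add: inV)
    then show ?thesis using False by force
  qed
qed

lemma path_len2: "is_path V E p x y \<Longrightarrow> x \<noteq> y \<Longrightarrow> length p \<ge> 2"
  unfolding is_path_def by (cases p) (auto, cases "tl p", auto)

lemma shortest_struct:
  assumes sp: "is_shortest_path V E p x y" and xy: "x \<noteq> y"
  shows "(fst x \<noteq> fst y \<and> p = [x,y]) \<or> (fst x = fst y \<and> (\<exists>w. p = [x,w,y] \<and> w \<in> V \<and> fst w \<noteq> fst x))"
proof -
  have pp: "is_path V E p x y" using sp unfolding is_shortest_path_def by auto
  have l2: "length p \<ge> 2" using path_len2[OF pp xy] .
  have xV: "x \<in> V" "y \<in> V" using pp unfolding is_path_def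
    using hd_in_set last_in_set by blast+
  show ?thesis
  proof (cases "fst x = fst y")
    case False
    have "length p \<le> 2" using sp path2[OF xV False] unfolding is_shortest_path_def by fastforce
    then have "length p = 2" using l2 by auto
    then obtain a b where "p = [a,b]" by (auto simp: numeral_2_eq_2 length_Suc_conv)
    then have "p = [x,y]" using pp unfolding is_path_def by auto
    then show ?thesis using False by auto
  next
    case True
    obtain w where w: "w \<in> V" "fst w \<noteq> fst x" using other_part[OF xV(1)] by auto
    have "length p \<le> 3" using sp path3[OF xV w(1) xy w(2) True] unfolding is_shortest_path_def by fastforce
    moreover have "length p \<noteq> 2"
    proof
      assume "length p = 2"
      then obtain a b where "p = [a,b]" by (auto simp: numeral_2_eq_2 length_Suc_conv)
      then have "{x,y} \<in> E" using pp unfolding is_path_def by force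
      then show False using True by (simp add: edge_iff)
    qed
    ultimately have "length p = 3" using l2 by auto
    then obtain a b c where p: "p = [a,b,c]" by (auto simp: numeral_3_eq_3 length_Suc_conv)
    then have "p = [x,b,y]" using pp unfolding is_path_def by auto
    moreover have "{x,b} \<in> E" using pp p \<open>p = [x,b,y]\<close> unfolding is_path_def by force
    ultimately show ?thesis using True by (auto simp: edge_iff)
  qed
qed

lemma sp2: "x \<in> V \<Longrightarrow> y \<in> V \<Longrightarrow> fst x \<noteq> fst y \<Longrightarrow> is_shortest_path V E [x,y] x y"
  unfolding is_shortest_path_def using path2 path_len2 by fastforce

lemma path_len3: "is_path V E q x y \<Longrightarrow> x \<noteq> y \<Longrightarrow> fst x = fst y \<Longrightarrow> length q \<ge> 3"
proof -
  assume pp: "is_path V E q x y" and xy: "x \<noteq> y" and f: "fst x = fst y"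
  have "length q \<noteq> 2"
  proof
    assume "length q = 2"
    then obtain a b where "q = [a,b]" by (auto simp: numeral_2_eq_2 length_Suc_conv)
    then have "{x,y} \<in> E" using pp unfolding is_path_def by force
    then show False using f by (simp add: edge_iff)
  qed
  then show ?thesis using path_len2[OF pp xy] by auto
qed

lemma sp3: assumes "x \<in> V" "y \<in> V" "w \<in> V" "x \<noteq> y" "fst w \<noteq> fst x" "fst x = fst y"
  shows "is_shortest_path V E [x,w,y] x y"
  unfolding is_shortest_path_def using path3[OF assms] path_len3[of _ x y] assms by (simp add: numeral_3_eq_3)

end

context kp begin

definition "tt = min (n 1) (fcov (n 2))"
definition "SS = {v \<in> V. \<not>(fst v = 1 \<and> snd v < tt)}"
definition "mid u v = (if fst u = 1 then (2,0) else
   (if col (n (fst u)) (snd u) (snd v) < tt then (1, col (n (fst u)) (snd u) (snd v)) else (1,0)))"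
definition "pth u v = (if fst u \<noteq> fst v then [u,v] else [u, mid u v, v])"
definition "Pf A = Some (SOME p. \<exists>u v. A = {u,v} \<and> p = pth u v)"

lemma n2: "n 2 \<ge> 2" using mono[of 1 2] n1 k2 by auto

lemma nj: "1 \<le> j \<Longrightarrow> j \<le> k \<Longrightarrow> n j \<ge> 2" using mono[of 1 j] n1 by auto

lemma tt_le: "tt \<le> n 1" unfolding tt_def by auto

lemma tt_fcov: assumes "2 \<le> j" "j \<le> k" shows "tt \<le> fcov (n j)"
proof -
  have "n 2 \<le> n j" using mono[of 2 j] assms by auto
  then have "fcov (n 2) \<le> fcov (n j)" unfolding fcov_def by presburger
  then show ?thesis unfolding tt_def by auto
qed

lemma mid_sym: "fst u = fst v \<Longrightarrow> mid u v = mid v u"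
  unfolding mid_def using col_sym by auto

lemma mid_ok: assumes "u \<in> V" shows "mid u v \<in> V" "fst (mid u v) \<noteq> fst u"
proof -
  have "(2,0) \<in> V" using n2 k2 by (simp add: inV)
  moreover have "(1,0) \<in> V" using n1 k2 by (simp add: inV)
  moreover have "c < tt \<Longrightarrow> (1,c) \<in> V" for c using tt_le k2 by (simp add: inV)
  ultimately show "mid u v \<in> V" "fst (mid u v) \<noteq> fst u" unfolding mid_def by auto
qed

lemma pth_sp: "u \<in> V \<Longrightarrow> v \<in> V \<Longrightarrow> u \<noteq> v \<Longrightarrow> is_shortest_path V E (pth u v) u v"
  unfolding pth_def using sp2 sp3[of u v "mid u v"] mid_ok[of u v] by auto

lemma Pf_some: assumes "Pf {u,v} = Some p" shows "p = pth u v \<or> p = pth v u"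
proof -
  have "\<exists>p u' v'. {u,v} = {u',v'} \<and> p = pth u' v'" by blast
  then have "\<exists>u' v'. {u,v} = {u',v'} \<and> (SOME p. \<exists>u' v'. {u,v} = {u',v'} \<and> p = pth u' v') = pth u' v'"
    by (rule someI_ex[where P="\<lambda>p. \<exists>u' v'. {u,v} = {u',v'} \<and> p = pth u' v'"]) 
  then show ?thesis using assms unfolding Pf_def by (auto simp: doubleton_eq_iff)
qed

lemma Pf_ex: "\<exists>p. Pf {u,v} = Some p" unfolding Pf_def by auto

lemma cov_out:
  assumes a: "a \<in> V" "a \<notin> SS" and b: "b \<in> V" and ab: "fst a \<noteq> fst b"
  shows "\<exists>u\<in>SS. \<exists>v\<in>SS. u \<noteq> v \<and> (\<exists>p. Pf {u, v} = Some p \<and> {a,b} \<in> path_edges p)"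
proof -
  have a1: "fst a = 1" "snd a < tt" using a unfolding SS_def by auto
  define j where "j = fst b"
  have j: "2 \<le> j" "j \<le> k" using b ab a1 unfolding j_def by (auto simp: inV)
  have bS: "b \<in> SS" using b ab a1 unfolding SS_def by auto
  have "snd a < fcov (n j)" using tt_fcov[OF j] a1 by auto
  from col_ex[OF nj[of j] this, of "snd b"] j b obtain c where
    c: "c < n j" "c \<noteq> snd b" "col (n j) (snd b) c = snd a" unfolding j_def by (auto simp: inV)
  define b' where "b' = (j, c)"
  have b'V: "b' \<in> V" using c j by (simp add: b'_def inV)
  have b'S: "b' \<in> SS" using b'V j unfolding SS_def b'_def by auto
  have bb': "b \<noteq> b'" using c unfolding b'_def j_def by (cases b) auto
  have fb: "fst b = fst b'" unfolding b'_def j_def by simp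
  have m: "mid b b' = a" using a1 c j unfolding mid_def b'_def j_def by (cases a) auto
  have m2: "mid b' b = a" using m mid_sym[OF fb] by metis
  obtain p where p: "Pf {b,b'} = Some p" using Pf_ex by blast
  have "{a,b} \<in> path_edges p"
    using Pf_some[OF p] m m2 fb unfolding pth_def by (auto simp: pe3 insert_commute)
  then show ?thesis using bS b'S bb' p by blast
qed

lemma Sup_seg: "strong_edge_geodetic V E SS"
  unfolding strong_edge_geodetic_def
proof (intro conjI exI[of _ Pf])
  show "SS \<subseteq> V" unfolding SS_def by auto
  show "\<forall>u\<in>SS. \<forall>v\<in>SS. u \<noteq> v \<longrightarrow> (\<forall>p. Pf {u, v} = Some p \<longrightarrow> is_shortest_path V E p u v \<or> is_shortest_path V E p v u)"
    using Pf_some pth_sp unfolding SS_def by fastforce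
  show "\<forall>e\<in>E. \<exists>u\<in>SS. \<exists>v\<in>SS. u \<noteq> v \<and> (\<exists>p. Pf {u, v} = Some p \<and> e \<in> path_edges p)"
  proof
    fix e assume "e \<in> E"
    then obtain a b where e: "e = {a,b}" "a \<in> V" "b \<in> V" "fst a \<noteq> fst b" unfolding kpart_E_def by auto
    show "\<exists>u\<in>SS. \<exists>v\<in>SS. u \<noteq> v \<and> (\<exists>p. Pf {u, v} = Some p \<and> e \<in> path_edges p)"
    proof (cases "a \<in> SS")
      case aS: True
      show ?thesis
      proof (cases "b \<in> SS")
        case True
        obtain p where p: "Pf {a,b} = Some p" using Pf_ex by blast
        have "e \<in> path_edges p" using Pf_some[OF p] e unfolding pth_def by (auto simp: pe2 insert_commute)
        moreover have "a \<noteq> b" using e by auto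
        ultimately show ?thesis using aS True p by blast
      next
        case False
        show ?thesis using cov_out[OF e(3) False e(2)] e by (auto simp: insert_commute)
      qed
    next
      case False
      show ?thesis using cov_out[OF e(2) False e(3,4)] e by auto
    qed
  qed
qed

lemma cardV: "card V = (\<Sum>j=1..k. n j)"
proof -
  have "V = Sigma {1..k} (\<lambda>i. {..<n i})" unfolding kpart_V_def by auto
  then show ?thesis by (simp add: card_SigmaI)
qed

lemma finV: "finite V"
proof -
  have "V = Sigma {1..k} (\<lambda>i. {..<n i})" unfolding kpart_V_def by auto
  then show ?thesis by simp
qed

lemma card_Sup: "card SS = card V - tt"
proof -
  have "V - SS = {1} \<times> {..<tt}" using tt_le k2 unfolding SS_def by (auto simp: inV)
  then have "card (V - SS) = tt" by (simp add: card_cartesian_product)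
  moreover have "SS \<subseteq> V" unfolding SS_def by auto
  ultimately show ?thesis using finV by (metis card_Diff_subset diff_diff_cancel card_mono finite_subset)
qed

end

context kp begin

lemma sp_edge:
  assumes sp: "is_shortest_path V E p x y" and xy: "x \<noteq> y"
    and e: "{a,b} \<in> path_edges p" and a: "a \<notin> {x,y}"
  shows "b \<in> {x,y} \<and> fst x = fst y \<and> p ! 1 = a"
  using shortest_struct[OF sp xy] e a by (auto simp: pe2 pe3 doubleton_eq_iff)

lemma sp_edge2:
  assumes sp: "is_shortest_path V E p x y \<or> is_shortest_path V E p y x" and xy: "x \<noteq> y"
    and e: "{a,b} \<in> path_edges p" and a: "a \<notin> {x,y}"
  shows "b \<in> {x,y} \<and> fst x = fst y \<and> p ! 1 = a"
  using sp_edge[of p x y a b] sp_edge[of p y x a b] sp xy e a by auto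

context
  fixes S P
  assumes SV: "S \<subseteq> V"
    and Pok: "\<forall>u\<in>S. \<forall>v\<in>S. u \<noteq> v \<longrightarrow>
            (\<forall>p. P {u, v} = Some p \<longrightarrow> is_shortest_path V E p u v \<or> is_shortest_path V E p v u)"
    and Pcov: "\<forall>e\<in>E. \<exists>u\<in>S. \<exists>v\<in>S. u \<noteq> v \<and> (\<exists>p. P {u, v} = Some p \<and> e \<in> path_edges p)"
begin

lemma one_part:
  assumes a: "a \<in> V" "a \<notin> S" and b: "b \<in> V" "b \<notin> S" shows "fst a = fst b"
proof (rule ccontr)
  assume "fst a \<noteq> fst b"
  then have "{a,b} \<in> E" using a b by (simp add: edge_iff)
  then obtain u v p where uv: "u \<in> S" "v \<in> S" "u \<noteq> v" "P {u,v} = Some p" "{a,b} \<in> path_edges p"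
    using Pcov by blast
  have "a \<notin> {u,v}" using a uv by auto
  from sp_edge2[OF _ uv(3) uv(5) this] Pok uv have "b \<in> {u,v}" by blast
  then show False using b uv by auto
qed

lemma count:
  assumes i: "a0 \<in> V" "a0 \<notin> S" and j: "1 \<le> j" "j \<le> k" "j \<noteq> fst a0"
  defines "Out \<equiv> {v\<in>V. fst v = fst a0} - S"
  shows "card Out * n j \<le> n j * (n j - 1) \<and> (odd (n j) \<longrightarrow> card Out * (n j + 1) \<le> n j * (n j - 1))"
proof -
  define Vj where "Vj = {v\<in>V. fst v = j}"
  have Vj_eq: "Vj = {j} \<times> {..<n j}" using j unfolding Vj_def by (auto simp: inV)
  have cVj: "card Vj = n j" unfolding Vj_eq by (simp add: card_cartesian_product)
  have finVj: "finite Vj" unfolding Vj_eq by simp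
  have VjS: "Vj \<subseteq> S"
  proof
    fix v assume v: "v \<in> Vj"
    show "v \<in> S"
    proof (rule ccontr)
      assume "v \<notin> S"
      then have "fst a0 = fst v" using one_part[OF i, of v] v unfolding Vj_def by auto
      then show False using v j unfolding Vj_def by auto
    qed
  qed
  define X where "X = {e. e \<subseteq> Vj \<and> card e = 2}"
  have finX: "finite X" unfolding X_def using finVj by simp
  have cX: "card X = n j choose 2" unfolding X_def using n_subsets[OF finVj, of 2] cVj by simp
  define md where "md e = the (P e) ! 1" for e
  define M where "M a = {e\<in>X. md e = a}" for a
  have finOut: "finite Out" unfolding Out_def using finV by auto
  have cover: "Vj \<subseteq> \<Union>(M a)" if a: "a \<in> Out" for a
  proof
    fix b assume b: "b \<in> Vj"
    have aV: "a \<in> V" "a \<notin> S" "fst a = fst a0" using a unfolding Out_def by auto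
    have "{a,b} \<in> E" using aV b j unfolding Vj_def by (auto simp: edge_iff)
    then obtain u v p where uv: "u \<in> S" "v \<in> S" "u \<noteq> v" "P {u,v} = Some p" "{a,b} \<in> path_edges p"
      using Pcov by blast
    have "a \<notin> {u,v}" using aV uv by auto
    from sp_edge2[OF _ uv(3) uv(5) this] Pok uv
    have r: "b \<in> {u,v}" "fst u = fst v" "p ! 1 = a" by blast+
    have "fst u = j" "fst v = j" using r b unfolding Vj_def by auto
    then have "{u,v} \<subseteq> Vj" using uv SV unfolding Vj_def by auto
    moreover have "card {u,v} = 2" using uv by auto
    moreover have "md {u,v} = a" unfolding md_def using uv r by simp
    ultimately have "{u,v} \<in> M a" unfolding M_def X_def by auto
    then show "b \<in> \<Union>(M a)" using r by auto
  qed
  have lowM: "n j \<le> 2 * card (M a)" if a: "a \<in> Out" for a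
  proof -
    have "\<Union>(M a) \<subseteq> Vj" unfolding M_def X_def by auto
    then have "finite (\<Union>(M a))" using finVj finite_subset by blast
    then have "n j \<le> card (\<Union>(M a))" using card_mono cover[OF a] cVj by metis
    also have "\<dots> \<le> sum card (M a)" by (rule card_Union_le_sum_card)
    also have "sum card (M a) = sum (\<lambda>_. 2) (M a)" by (rule sum.cong) (auto simp: M_def X_def)
    also have "\<dots> = 2 * card (M a)" by simp
    finally show ?thesis .
  qed
  have "(\<Sum>a\<in>Out. card (M a)) = card (\<Union>(M ` Out))"
    by (rule card_UN_disjoint[symmetric]) (use finOut finX in \<open>auto simp: M_def\<close>)
  also have "\<dots> \<le> card X" by (rule card_mono[OF finX]) (auto simp: M_def)
  finally have sumle: "(\<Sum>a\<in>Out. card (M a)) \<le> n j choose 2" using cX by simp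
  have ev: "even (n j * (n j - 1))" by auto
  have c2: "2 * (n j choose 2) = n j * (n j - 1)" unfolding choose_two using ev by simp
  have A: "card Out * n j \<le> 2 * (\<Sum>a\<in>Out. card (M a))"
    using sum_bounded_below[of Out "n j" "\<lambda>a. 2 * card (M a)"] lowM by (simp add: sum_distrib_left)
  have B: "card Out * (n j + 1) \<le> 2 * (\<Sum>a\<in>Out. card (M a))" if od: "odd (n j)"
  proof -
    have "n j + 1 \<le> 2 * card (M a)" if "a \<in> Out" for a using lowM[OF that] od by presburger
    then show ?thesis
      using sum_bounded_below[of Out "n j + 1" "\<lambda>a. 2 * card (M a)"] by (simp add: sum_distrib_left)
  qed
  have s2: "2 * (\<Sum>a\<in>Out. card (M a)) \<le> n j * (n j - 1)" using sumle c2 by linarith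
  show ?thesis using A B s2 le_trans by blast
qed

end

end

lemma arith1: "(m::nat) \<ge> 1 \<Longrightarrow> t*m \<le> m*(m-1) \<Longrightarrow> t \<le> m-1"
  by (metis mult.commute mult_le_cancel2 not_one_le_zero not_gr0)

lemma arith2: assumes "(m::nat) \<ge> 2" "t*(m+1) \<le> m*(m-1)" shows "t \<le> m-2"
proof (rule ccontr)
  assume "\<not> t \<le> m - 2"
  then have "m - 1 \<le> t" by auto
  then have "(m-1)*(m+1) \<le> t*(m+1)" by (rule mult_le_mono1)
  moreover have "(m-1)*m < (m-1)*(m+1)" using assms(1) by (intro mult_less_mono2) auto
  ultimately show False using assms(2) by (simp add: mult.commute)
qed

definition tgt :: "nat \<Rightarrow> nat \<Rightarrow> nat \<Rightarrow> nat" where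
  "tgt n1 n2 N = (if even n1 then (if n2 \<in> {n1, n1 + 1} then N + 1 else N) else (if n2 = n1 then N + 2 else N))"

lemma fin_arith1: "n1 \<ge> 2 \<Longrightarrow> t \<le> n1 \<Longrightarrow> n1 \<le> n2 \<Longrightarrow> t \<le> n2 - 1 \<Longrightarrow> (odd n2 \<Longrightarrow> t \<le> n2 - 2) \<Longrightarrow>
   tgt n1 n2 N \<le> n1 + N - t"
proof -
  assume a: "n1 \<ge> 2" "t \<le> n1" "n1 \<le> n2" "t \<le> n2 - 1" "odd n2 \<Longrightarrow> t \<le> n2 - 2"
  show ?thesis
  proof (cases "odd n2")
    case True
    then have "t \<le> n2 - 2" using a by auto
    then show ?thesis using a True unfolding tgt_def by (cases "even n1"; cases "n2 = n1"; cases "n2 = n1 + 1") auto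
  next
    case False
    then show ?thesis using a unfolding tgt_def by (cases "even n1"; cases "n2 = n1"; cases "n2 = n1 + 1") auto
  qed
qed

lemma fin_arith2: "n1 \<ge> 2 \<Longrightarrow> t \<le> n1 - 1 \<Longrightarrow> (odd n1 \<Longrightarrow> t \<le> n1 - 2) \<Longrightarrow>
   tgt n1 n2 N \<le> n1 + N - t"
  unfolding tgt_def by (cases "odd n1") auto

lemma fin_arith3: "n1 \<ge> 2 \<Longrightarrow> tgt n1 n2 N \<le> n1 + N"
  unfolding tgt_def by auto

lemma fin_arith4: "n1 \<ge> 2 \<Longrightarrow> n1 \<le> n2 \<Longrightarrow> n1 + N - min n1 (fcov n2) = tgt n1 n2 N"
  unfolding tgt_def fcov_def by (cases "even n1"; cases "even n2") (auto, presburger+)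

context kp begin

abbreviation "NN \<equiv> (\<Sum>j=2..k. n j)"

lemma cardV2: "card V = n 1 + NN"
  using cardV k2 by (simp add: sum.atLeast_Suc_atMost numeral_2_eq_2)

lemma n12: "n 1 \<le> n 2" using mono[of 1 2] k2 by auto

lemma lower:
  assumes fin: "finite S" and seg: "strong_edge_geodetic V E S"
  shows "tgt (n 1) (n 2) NN \<le> card S"
proof -
  obtain P where SV: "S \<subseteq> V"
    and Pok: "\<forall>u\<in>S. \<forall>v\<in>S. u \<noteq> v \<longrightarrow>
            (\<forall>p. P {u, v} = Some p \<longrightarrow> is_shortest_path V E p u v \<or> is_shortest_path V E p v u)"
    and Pcov: "\<forall>e\<in>E. \<exists>u\<in>S. \<exists>v\<in>S. u \<noteq> v \<and> (\<exists>p. P {u, v} = Some p \<and> e \<in> path_edges p)"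
    using seg unfolding strong_edge_geodetic_def by blast
  show ?thesis
  proof (cases "V \<subseteq> S")
    case True
    then have "card V \<le> card S" using fin card_mono by blast
    then show ?thesis using cardV2 fin_arith3[OF n1, of "n 2" NN] by linarith
  next
    case False
    then obtain a0 where a0: "a0 \<in> V" "a0 \<notin> S" by auto
    define Out where "Out = {v\<in>V. fst v = fst a0} - S"
    have VS: "V - S = Out" unfolding Out_def using one_part[OF SV Pok Pcov a0] by auto
    have "card V \<le> card (S \<union> (V - S))" using fin finV by (intro card_mono) auto
    also have "\<dots> \<le> card S + card (V - S)" by (rule card_Un_le)
    finally have cS: "card V - card Out \<le> card S" using VS by simp
    have i: "1 \<le> fst a0" "fst a0 \<le> k" using a0 by (auto simp: inV)
    have "Out \<subseteq> {fst a0} \<times> {..<n (fst a0)}" unfolding Out_def by (auto simp: inV)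
    then have tO: "card Out \<le> n (fst a0)" using card_mono[of "{fst a0} \<times> {..<n (fst a0)}" Out]
      by (simp add: card_cartesian_product)
    show ?thesis
    proof (cases "fst a0 = 1")
      case True
      have j: "1 \<le> (2::nat)" "2 \<le> k" "2 \<noteq> fst a0" using k2 True by auto
      from count[OF SV Pok Pcov a0 j] have c: "card Out * n 2 \<le> n 2 * (n 2 - 1)"
        "odd (n 2) \<Longrightarrow> card Out * (n 2 + 1) \<le> n 2 * (n 2 - 1)" unfolding Out_def by auto
      have "card Out \<le> n 2 - 1" using arith1[OF _ c(1)] n2 by auto
      moreover have "odd (n 2) \<Longrightarrow> card Out \<le> n 2 - 2" using arith2[OF n2 c(2)] by auto
      moreover have "card Out \<le> n 1" using tO True by simp
      ultimately have "tgt (n 1) (n 2) NN \<le> n 1 + NN - card Out" using fin_arith1[OF n1] n12 by blast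
      then show ?thesis using cS cardV2 by linarith
    next
      case False
      have j: "1 \<le> (1::nat)" "1 \<le> k" "1 \<noteq> fst a0" using k2 False by auto
      from count[OF SV Pok Pcov a0 j] have c: "card Out * n 1 \<le> n 1 * (n 1 - 1)"
        "odd (n 1) \<Longrightarrow> card Out * (n 1 + 1) \<le> n 1 * (n 1 - 1)" unfolding Out_def by auto
      have "card Out \<le> n 1 - 1" using arith1[OF _ c(1)] n1 by auto
      moreover have "odd (n 1) \<Longrightarrow> card Out \<le> n 1 - 2" using arith2[OF n1 c(2)] by auto
      ultimately have "tgt (n 1) (n 2) NN \<le> n 1 + NN - card Out" using fin_arith2[OF n1] by blast
      then show ?thesis using cS cardV2 by linarith
    qed
  qed
qed

lemma sg_val: "sg_e V E = tgt (n 1) (n 2) NN"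
  unfolding sg_e_def
proof (rule Least_equality)
  have "finite SS" using finV unfolding SS_def by auto
  moreover have "card SS = tgt (n 1) (n 2) NN"
    using card_Sup cardV2 fin_arith4[OF n1 n12] unfolding tt_def by simp
  ultimately show "\<exists>S. finite S \<and> strong_edge_geodetic V E S \<and> card S = tgt (n 1) (n 2) NN"
    using Sup_seg by blast
next
  fix m assume "\<exists>S. finite S \<and> strong_edge_geodetic V E S \<and> card S = m"
  then show "tgt (n 1) (n 2) NN \<le> m" using lower by blast
qed

end

theorem mainTheorem7:
  fixes k :: nat and n :: "nat \<Rightarrow> nat"
  assumes "k \<ge> 2" and "n 1 \<ge> 2"
    and "\<And>i j. 1 \<le> i \<Longrightarrow> i \<le> j \<Longrightarrow> j \<le> k \<Longrightarrow> n i \<le> n j"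
  shows "(even (n 1) \<longrightarrow> sg_e (kpart_V k n) (kpart_E k n) =
            (if n 2 \<in> {n 1, n 1 + 1} then (\<Sum>j=2..k. n j) + 1 else (\<Sum>j=2..k. n j)))
       \<and> (odd (n 1) \<longrightarrow> sg_e (kpart_V k n) (kpart_E k n) =
            (if n 2 = n 1 then (\<Sum>j=2..k. n j) + 2 else (\<Sum>j=2..k. n j)))"
proof -
  interpret kp k n using assms by unfold_locales auto
  show ?thesis using sg_val unfolding tgt_def by auto
qed

end
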